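(* Let $n$ be a positive integer, $1\le k\le n$, $w\in\mathfrak S_n$, and $\rho\in\mathcal A_w(n,k)$. (a) The reversal set $\mathrm{Rev}_{n,k,w}(\rho)\subseteq\mathrm{Inv}_{k+1}(w)$ is a lower order ideal of $\mathcal P_w(n,k+1)$, and for every $X\in\mathrm{Inv}_{k+2}(w)$ its intersection with $P(X)$ is a prefix or a suffix of $P(X)$. (b) If $\sigma$ is a total order of $\mathrm{Inv}_k(w)$ with $\sigma\sim_w\rho$, then $\sigma\in\mathcal A_w(n,k)$ and $\mathrm{Rev}_{n,k,w}(\rho)=\mathrm{Rev}_{n,k,w}(\sigma)$. (c) If $\sigma$ is obtained from $\rho$ by a packet flip at $P(X)$ for some $X\in\mathrm{Inv}_{k+1}(w)$ whose packet is flippable in $\rho$, then $\sigma\in\mathcal A_w(n,k)$ and $\mathrm{Rev}_{n,k,w}(\sigma)\,\triangle\,\mathrm{Rev}_{n,k,w}(\rho)=\{X\}$, where $\triangle$ denotes symmetric difference.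
   Context: $\mathfrak S_n$ is the symmetric group on $[n]$. For $m\ge0$, $\binom{[n]}{m}$ is the set of $m$-element subsets of $[n]$, written $[x_1,\dots,x_m]$ with $x_1<\dots<x_m$. For $X=[x_1,\dots,x_m]$ and $i\in[m]$, $X_i$ is $X$ with $x_i$ removed; $P(X)=\{X_1,\dots,X_m\}$, with lex order $(X_m,\dots,X_1)$ and antilex order $(X_1,\dots,X_m)$. A prefix of $P(X)$ is a set $\{X_m,\dots,X_i\}$, a suffix is a set $\{X_i,\dots,X_1\}$ (the empty set counts as both). $\mathrm{Inv}_m(w)=\{[x_1,\dots,x_m]\in\binom{[n]}{m}: w^{-1}(x_1)>\dots>w^{-1}(x_m)\}$ (empty if $m>n$). $X\in\binom{[n]}{m}$ is an $m$-quasi-inversion of $w$ if exactly one pair $[x_a,x_b]$, $a<b$, is not in $\mathrm{Inv}_2(w)$. $\mathcal P_w(n,m)$ is $\mathrm{Inv}_m(w)$ with the reflexive-transitive closure of: whenever $X\in\binom{[n]}{m+1}$ is a quasi-inversion with $P(X)\cap\mathrm{Inv}_m(w)=\{X_i,X_{i+1}\}$, $X_i<X_{i+1}$ if $m-i$ is odd and $X_{i+1}<X_i$ if $m-i$ is even. $\mathcal A_w(n,k)$ is the set of total orders $\rho$ of $\mathrm{Inv}_k(w)$ that are linear extensions of $\mathcal P_w(n,k)$ and such that for each $X\in\mathrm{Inv}_{k+1}(w)$, $\rho|_{P(X)}$ is the lex or antilex order. $\mathrm{Rev}_{n,k,w}(\rho)=\{X\in\mathrm{Inv}_{k+1}(w):\rho|_{P(X)}=(X_1,\dots,X_{k+1})\}$.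 Two elements of $\mathrm{Inv}_k(w)$ commute if they are incomparable in $\mathcal P_w(n,k)$ and no $Z\in\binom{[n]}{k+1}$ has both in $P(Z)$; $\sim_w$ is the equivalence on total orders generated by swapping adjacent commuting elements. For $X\in\mathrm{Inv}_{k+1}(w)$, $P(X)$ is flippable in $\rho$ if its elements occupy consecutive positions of $\rho$; the packet flip at $P(X)$ reverses the order of that block (lex-to-antilex or antilex-to-lex). *)

theory Defs
  imports "HOL-Combinatorics.Permutations"
begin

text \<open>Subsets of [n] = {1..n} are represented as finite sets of naturals.
  Total orders of a finite set are represented as distinct lists enumerating it
  (earlier position = smaller).\<close>

definition binom :: "nat \<Rightarrow> nat \<Rightarrow> nat set set" where
  "binom n m = {X. X \<subseteq> {1..n} \<and> card X = m}"

text \<open>i-th smallest element (1-based) of X\<close>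
definition elem :: "nat set \<Rightarrow> nat \<Rightarrow> nat" where
  "elem X i = sorted_list_of_set X ! (i - 1)"

definition subs :: "nat set \<Rightarrow> nat \<Rightarrow> nat set" where
  "subs X i = X - {elem X i}"

definition packet :: "nat set \<Rightarrow> nat set set" where
  "packet X = subs X ` {1..card X}"

definition lex_list :: "nat set \<Rightarrow> nat set list" where
  "lex_list X = map (subs X) (rev [1..<card X + 1])"

definition antilex_list :: "nat set \<Rightarrow> nat set list" where
  "antilex_list X = map (subs X) [1..<card X + 1]"

text \<open>prefix {X_m,...,X_i} and suffix {X_i,...,X_1} of P(X) (empty set allowed)\<close>
definition is_prefix_packet :: "nat set \<Rightarrow> nat set set \<Rightarrow> bool" where
  "is_prefix_packet X S \<longleftrightarrow> (\<exists>i. 1 \<le> i \<and> i \<le> card X + 1 \<and> S = subs X ` {i..card X})"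

definition is_suffix_packet :: "nat set \<Rightarrow> nat set set \<Rightarrow> bool" where
  "is_suffix_packet X S \<longleftrightarrow> (\<exists>i. i \<le> card X \<and> S = subs X ` {1..i})"

definition Inv :: "(nat \<Rightarrow> nat) \<Rightarrow> nat \<Rightarrow> nat \<Rightarrow> nat set set" where
  "Inv w n m = {X \<in> binom n m. \<forall>x\<in>X. \<forall>y\<in>X. x < y \<longrightarrow> inv w y < inv w x}"

definition quasi_inv :: "(nat \<Rightarrow> nat) \<Rightarrow> nat set \<Rightarrow> bool" where
  "quasi_inv w X \<longleftrightarrow> card {(x, y). x \<in> X \<and> y \<in> X \<and> x < y \<and> \<not> inv w y < inv w x} = 1"

text \<open>generating covering relations of P_w(n,m); (A,B) means A < B\<close>
definition P_gen :: "(nat \<Rightarrow> nat) \<Rightarrow> nat \<Rightarrow> nat \<Rightarrow> (nat set \<times> nat set) set" where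
  "P_gen w n m = {(A, B). \<exists>X \<in> binom n (m + 1). quasi_inv w X \<and>
      (\<exists>i. 1 \<le> i \<and> i \<le> m \<and> packet X \<inter> Inv w n m = {subs X i, subs X (i + 1)} \<and>
        (if odd (m - i) then (A, B) = (subs X i, subs X (i + 1))
                        else (A, B) = (subs X (i + 1), subs X i)))}"

definition P_ord :: "(nat \<Rightarrow> nat) \<Rightarrow> nat \<Rightarrow> nat \<Rightarrow> (nat set \<times> nat set) set" where
  "P_ord w n m = {(A, B). A \<in> Inv w n m \<and> B \<in> Inv w n m \<and> (A, B) \<in> (P_gen w n m)\<^sup>*}"

definition total_order_of :: "nat set set \<Rightarrow> nat set list \<Rightarrow> bool" where
  "total_order_of S \<rho> \<longleftrightarrow> distinct \<rho> \<and> set \<rho> = S"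

definition precedes :: "nat set list \<Rightarrow> nat set \<Rightarrow> nat set \<Rightarrow> bool" where
  "precedes \<rho> A B \<longleftrightarrow> (\<exists>i j. i \<le> j \<and> j < length \<rho> \<and> \<rho> ! i = A \<and> \<rho> ! j = B)"

definition restrict_order :: "nat set list \<Rightarrow> nat set set \<Rightarrow> nat set list" where
  "restrict_order \<rho> S = filter (\<lambda>A. A \<in> S) \<rho>"

definition A_set :: "(nat \<Rightarrow> nat) \<Rightarrow> nat \<Rightarrow> nat \<Rightarrow> nat set list set" where
  "A_set w n k = {\<rho>. total_order_of (Inv w n k) \<rho>
      \<and> (\<forall>(A, B) \<in> P_ord w n k. precedes \<rho> A B)
      \<and> (\<forall>X \<in> Inv w n (k + 1). restrict_order \<rho> (packet X) = lex_list X
                              \<or> restrict_order \<rho> (packet X) = antilex_list X)}"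

definition Rev :: "nat \<Rightarrow> nat \<Rightarrow> (nat \<Rightarrow> nat) \<Rightarrow> nat set list \<Rightarrow> nat set set" where
  "Rev n k w \<rho> = {X \<in> Inv w n (k + 1). restrict_order \<rho> (packet X) = antilex_list X}"

definition commute :: "(nat \<Rightarrow> nat) \<Rightarrow> nat \<Rightarrow> nat \<Rightarrow> nat set \<Rightarrow> nat set \<Rightarrow> bool" where
  "commute w n k A B \<longleftrightarrow> A \<in> Inv w n k \<and> B \<in> Inv w n k
     \<and> (A, B) \<notin> P_ord w n k \<and> (B, A) \<notin> P_ord w n k
     \<and> \<not> (\<exists>Z \<in> binom n (k + 1). A \<in> packet Z \<and> B \<in> packet Z)"

definition comm_swap :: "(nat \<Rightarrow> nat) \<Rightarrow> nat \<Rightarrow> nat \<Rightarrow> (nat set list \<times> nat set list) set" where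
  "comm_swap w n k = {(\<rho>, \<sigma>). \<exists>xs A B ys. commute w n k A B
       \<and> \<rho> = xs @ [A, B] @ ys \<and> \<sigma> = xs @ [B, A] @ ys}"

definition comm_equiv :: "(nat \<Rightarrow> nat) \<Rightarrow> nat \<Rightarrow> nat \<Rightarrow> nat set list \<Rightarrow> nat set list \<Rightarrow> bool" where
  "comm_equiv w n k \<sigma> \<rho> \<longleftrightarrow> (\<sigma>, \<rho>) \<in> (comm_swap w n k \<union> (comm_swap w n k)\<inverse>)\<^sup>*"

end

theory Submission
  imports Defs
begin


definition bef :: "'a list \<Rightarrow> 'a \<Rightarrow> 'a \<Rightarrow> bool" where
  "bef \<rho> A B \<longleftrightarrow> (\<exists>i j. i < j \<and> j < length \<rho> \<and> \<rho> ! i = A \<and> \<rho> ! j = B)"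

lemma bef_set: "bef \<rho> A B \<Longrightarrow> A \<in> set \<rho> \<and> B \<in> set \<rho>"
  unfolding bef_def by auto

lemma bef_irrefl: "distinct \<rho> \<Longrightarrow> \<not> bef \<rho> A A"
  unfolding bef_def by (auto simp: nth_eq_iff_index_eq)

lemma bef_trans: "distinct \<rho> \<Longrightarrow> bef \<rho> A B \<Longrightarrow> bef \<rho> B C \<Longrightarrow> bef \<rho> A C"
proof -
  assume d: "distinct \<rho>" and "bef \<rho> A B" "bef \<rho> B C"
  then obtain i j i' j' where "i < j" "j < length \<rho>" "\<rho> ! i = A" "\<rho> ! j = B"
    "i' < j'" "j' < length \<rho>" "\<rho> ! i' = B" "\<rho> ! j' = C" unfolding bef_def by blast
  moreover have "j = i'" using calculation d nth_eq_iff_index_eq by (metis order.strict_trans)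
  ultimately show ?thesis unfolding bef_def by (metis order.strict_trans)
qed

lemma bef_asym: "distinct \<rho> \<Longrightarrow> bef \<rho> A B \<Longrightarrow> \<not> bef \<rho> B A"
  using bef_trans bef_irrefl by metis

lemma bef_total: "A \<in> set \<rho> \<Longrightarrow> B \<in> set \<rho> \<Longrightarrow> A \<noteq> B \<Longrightarrow> bef \<rho> A B \<or> bef \<rho> B A"
  unfolding bef_def by (metis in_set_conv_nth linorder_neqE_nat)

lemma bef_append: "bef (xs @ ys) C D \<longleftrightarrow> bef xs C D \<or> bef ys C D \<or> (C \<in> set xs \<and> D \<in> set ys)"
proof
  assume "bef (xs @ ys) C D"
  then obtain i j where ij: "i < j" "j < length (xs@ys)" "(xs@ys) ! i = C" "(xs@ys) ! j = D"
    unfolding bef_def by blast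
  show "bef xs C D \<or> bef ys C D \<or> (C \<in> set xs \<and> D \<in> set ys)"
  proof (cases "j < length xs")
    case True
    then show ?thesis using ij unfolding bef_def by (auto simp: nth_append)
  next
    case False
    note F = False
    show ?thesis
    proof (cases "i < length xs")
      case True
      then show ?thesis using ij F by (auto simp: nth_append)
    next
      case False
      then have "i - length xs < j - length xs" "j - length xs < length ys"
        using ij F by auto
      then show ?thesis using ij F False unfolding bef_def by (auto simp: nth_append)
    qed
  qed
next
  assume "bef xs C D \<or> bef ys C D \<or> (C \<in> set xs \<and> D \<in> set ys)"
  then show "bef (xs @ ys) C D"
  proof (elim disjE)
    assume "bef xs C D"
    then obtain i j where "i < j" "j < length xs" "xs ! i = C" "xs ! j = D"
      unfolding bef_def by blast
    then show ?thesis unfolding bef_def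
      by (rule_tac x=i in exI, rule_tac x=j in exI) (auto simp: nth_append)
  next
    assume "bef ys C D"
    then obtain i j where "i < j" "j < length ys" "ys ! i = C" "ys ! j = D"
      unfolding bef_def by blast
    then show ?thesis unfolding bef_def
      by (rule_tac x="length xs + i" in exI, rule_tac x="length xs + j" in exI) (auto simp: nth_append)
  next
    assume "C \<in> set xs \<and> D \<in> set ys"
    then obtain i j where "i < length xs" "xs ! i = C" "j < length ys" "ys ! j = D"
      by (auto simp: in_set_conv_nth)
    then show ?thesis unfolding bef_def
      by (rule_tac x="i" in exI, rule_tac x="length xs + j" in exI) (auto simp: nth_append)
  qed
qed

lemma bef_rev: "bef (rev xs) C D \<longleftrightarrow> bef xs D C"
proof -
  have "bef xs D C" if H: "bef (rev xs) C D" for xs :: "'a list" and C D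
  proof -
    obtain i j where "i < j" "j < length xs" "rev xs ! i = C" "rev xs ! j = D"
      using H unfolding bef_def length_rev by blast
    note h = this
    have "xs ! (length xs - 1 - j) = D" "xs ! (length xs - 1 - i) = C"
      using h by (simp_all add: rev_nth)
    moreover have "length xs - 1 - j < length xs - 1 - i" "length xs - 1 - i < length xs"
      using h by linarith+
    ultimately show ?thesis unfolding bef_def by blast
  qed
  from this[of xs C D] this[of "rev xs" D C] show ?thesis by auto
qed

lemma bef_flip:
  assumes "\<not> (C \<in> set m \<and> D \<in> set m)" "bef (xs @ m @ ys) C D"
  shows "bef (xs @ rev m @ ys) C D"
  using assms by (auto simp: bef_append bef_rev dest: bef_set)

lemma precedes_iff: "precedes \<rho> A B \<longleftrightarrow> (A = B \<and> A \<in> set \<rho>) \<or> bef \<rho> A B"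
  unfolding precedes_def bef_def
  apply (rule iffI)
   apply (metis in_set_conv_nth le_neq_implies_less)
  apply (auto simp: in_set_conv_nth intro: less_imp_le)
  done

lemma sorted_wrt_unique:
  assumes "distinct xs" "distinct ys" "set xs = set ys" "sorted_wrt R xs" "sorted_wrt R ys"
    "\<And>x y. R x y \<Longrightarrow> \<not> R y x"
  shows "xs = ys"
  using assms(1-5)
proof (induction xs arbitrary: ys)
  case Nil
  then show ?case by auto
next
  case (Cons x xs)
  then obtain y ys' where ys: "ys = y # ys'" by (cases ys) auto
  show ?case
  proof (cases "x = y")
    case True
    then have "set xs = set ys'" using Cons.prems ys by auto
    then show ?thesis using Cons ys True by auto
  next
    case False
    then have "y \<in> set xs" "x \<in> set ys'" using Cons.prems ys by auto
    then have "R x y" "R y x" using Cons.prems ys by auto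
    then show ?thesis using assms(6) by blast
  qed
qed

lemma sorted_bef: "sorted_wrt (bef \<rho>) \<rho>"
  unfolding sorted_wrt_iff_nth_less bef_def by auto

lemma rev_neq: "distinct xs \<Longrightarrow> 2 \<le> length xs \<Longrightarrow> rev xs \<noteq> xs"
proof
  assume d: "distinct xs" and l: "2 \<le> length xs" and e: "rev xs = xs"
  have "rev xs ! 0 = xs ! (length xs - 1)" using l rev_nth[of 0 xs] by (cases xs) auto
  then have "xs ! 0 = xs ! (length xs - 1)" using e by simp
  then have "0 = length xs - 1" using l nth_eq_iff_index_eq[OF d, of 0 "length xs - 1"] by (cases xs) auto
  then show False using l by simp
qed

lemma len_le1: "distinct l \<Longrightarrow> (\<forall>a\<in>set l. \<forall>b\<in>set l. a = b) \<Longrightarrow> rev l = l"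
proof (cases l)
  case (Cons a l')
  assume d: "distinct l" and e: "\<forall>a\<in>set l. \<forall>b\<in>set l. a = b"
  show ?thesis
  proof (cases l')
    case (Cons b l'')
    have "a \<in> set l" "b \<in> set l" using Cons \<open>l = a # l'\<close> by auto
    then have "a = b" using e by blast
    then show ?thesis using d Cons \<open>l = a # l'\<close> by simp
  qed (simp add: Cons)
qed simp



definition rank :: "nat set \<Rightarrow> nat \<Rightarrow> nat" where
  "rank X x = card {y \<in> X. y < x}"

lemma rank_nth:
  assumes "finite X" "t < card X"
  shows "rank X (sorted_list_of_set X ! t) = t"
proof -
  let ?L = "sorted_list_of_set X"
  have sL: "sorted_wrt (<) ?L" by (simp add: strict_sorted_list_of_set)
  have len: "length ?L = card X" by simp
  have "{y \<in> X. y < ?L ! t} = set (take t ?L)"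
  proof
    show "{y \<in> X. y < ?L ! t} \<subseteq> set (take t ?L)"
    proof
      fix y assume "y \<in> {y \<in> X. y < ?L ! t}"
      then have y: "y \<in> set ?L" "y < ?L ! t" using assms by auto
      then obtain s where s: "s < length ?L" "?L ! s = y" by (auto simp: in_set_conv_nth)
      have "s < t"
      proof (rule ccontr)
        assume "\<not> s < t"
        then have "?L ! t \<le> ?L ! s"
          using sorted_nth_mono[of ?L t s] s by simp
        then show False using s y by simp
      qed
      then show "y \<in> set (take t ?L)" using s assms len
        by (auto simp: in_set_conv_nth intro!: exI[of _ s])
    qed
  next
    show "set (take t ?L) \<subseteq> {y \<in> X. y < ?L ! t}"
    proof
      fix y assume "y \<in> set (take t ?L)"
      then obtain s where s: "s < t" "?L ! s = y" using assms len
        by (auto simp: in_set_conv_nth)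
      have "?L ! s < ?L ! t" using sorted_wrt_nth_less[OF sL s(1)] assms len by simp
      moreover have "y \<in> set ?L" using s assms len by (metis nth_mem order.strict_trans)
      ultimately show "y \<in> {y \<in> X. y < ?L ! t}" using s assms by auto
    qed
  qed
  then have "rank X (?L ! t) = card (set (take t ?L))" unfolding rank_def by simp
  also have "\<dots> = t" using assms len
    by (simp add: distinct_card min_def)
  finally show ?thesis .
qed

lemma elem_in:
  assumes "finite X" "1 \<le> j" "j \<le> card X"
  shows "elem X j \<in> X"
  using assms unfolding elem_def
  by (metis diff_less le_trans less_numeral_extra(1) linorder_not_le nth_mem
      sorted_list_of_set.length_sorted_key_list_of_set sorted_list_of_set.set_sorted_key_list_of_set)

lemma rank_elem:
  assumes "finite X" "1 \<le> j" "j \<le> card X"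
  shows "rank X (elem X j) = j - 1"
  using assms rank_nth[of X "j - 1"] unfolding elem_def by simp

lemma elem_rank:
  assumes "finite X" "x \<in> X"
  shows "elem X (rank X x + 1) = x"
proof -
  obtain t where t: "t < card X" "sorted_list_of_set X ! t = x"
    using assms by (metis in_set_conv_nth sorted_list_of_set.length_sorted_key_list_of_set
        sorted_list_of_set.set_sorted_key_list_of_set)
  then show ?thesis using rank_nth[OF assms(1) t(1)] unfolding elem_def by simp
qed

lemma rank_less_card:
  assumes "finite X" "x \<in> X"
  shows "rank X x < card X"
  unfolding rank_def using assms
  by (intro psubset_card_mono) auto

lemma rank_mono:
  assumes "finite X" "x \<in> X" "y \<in> X" "x < y"
  shows "rank X x < rank X y"
  unfolding rank_def using assms
  by (intro psubset_card_mono) auto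

lemma rank_le_iff:
  assumes "finite X" "x \<in> X" "y \<in> X"
  shows "rank X x \<le> rank X y \<longleftrightarrow> x \<le> y"
proof (cases x y rule: linorder_cases)
  case less
  then show ?thesis using rank_mono[OF assms(1) assms(2,3)] by simp
next
  case greater
  then show ?thesis using rank_mono[OF assms(1) assms(3,2)] by simp
qed simp

lemma elem_image:
  assumes "finite X" "J \<subseteq> {1..card X}"
  shows "elem X ` J = {x \<in> X. rank X x + 1 \<in> J}"
proof
  show "elem X ` J \<subseteq> {x \<in> X. rank X x + 1 \<in> J}"
  proof
    fix x assume "x \<in> elem X ` J"
    then obtain j where j: "j \<in> J" "x = elem X j" by blast
    then have "1 \<le> j" "j \<le> card X" using assms by auto
    then show "x \<in> {x \<in> X. rank X x + 1 \<in> J}"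
      using j elem_in[OF assms(1)] rank_elem[OF assms(1)] by auto
  qed
next
  show "{x \<in> X. rank X x + 1 \<in> J} \<subseteq> elem X ` J"
  proof
    fix x assume "x \<in> {x \<in> X. rank X x + 1 \<in> J}"
    then show "x \<in> elem X ` J" using elem_rank[OF assms(1)]
      by (metis (no_types, lifting) image_eqI mem_Collect_eq)
  qed
qed

lemma elem_image_all:
  assumes "finite X"
  shows "elem X ` {1..card X} = X"
  using elem_image[OF assms, of "{1..card X}"] rank_less_card[OF assms] by (auto simp: Suc_le_eq)

lemma packet_alt:
  assumes "finite X"
  shows "packet X = (\<lambda>x. X - {x}) ` X"
proof -
  have "packet X = (\<lambda>x. X - {x}) ` (elem X ` {1..card X})"
    unfolding packet_def subs_def by (simp add: image_image)
  then show ?thesis using elem_image_all[OF assms] by simp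
qed

lemma diff_inj: "x \<in> X \<Longrightarrow> y \<in> X \<Longrightarrow> X - {x} = X - {y} \<Longrightarrow> x = y"
  by blast

lemma packet_inter:
  assumes "finite X" "finite Y" "A \<in> packet X" "A' \<in> packet X" "A \<in> packet Y" "A' \<in> packet Y"
    "A \<noteq> A'"
  shows "X = Y"
proof -
  have "A \<in> (\<lambda>x. X - {x}) ` X" "A' \<in> (\<lambda>x. X - {x}) ` X"
    "A \<in> (\<lambda>x. Y - {x}) ` Y" "A' \<in> (\<lambda>x. Y - {x}) ` Y"
    using assms packet_alt by simp_all
  then obtain a a' b b' where "a \<in> X" "a' \<in> X" "b \<in> Y" "b' \<in> Y" "A = X - {a}" "A' = X - {a'}"
    "A = Y - {b}" "A' = Y - {b'}" by (elim imageE) blast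
  note h = this
  then have "a \<noteq> a'" "b \<noteq> b'" using assms(7) by auto
  then have "X = A \<union> A'" "Y = A \<union> A'" using h by auto
  then show ?thesis by simp
qed

lemma map_upt_nth: "map (\<lambda>j. L ! (j - 1)) [1..<length L + 1] = L"
proof -
  have "[1..<length L + 1] = map Suc [0..<length L]" by (simp add: map_Suc_upt)
  then show ?thesis by (simp add: map_nth comp_def)
qed

lemma antilex_alt:
  assumes "finite X"
  shows "antilex_list X = map (\<lambda>x. X - {x}) (sorted_list_of_set X)"
proof -
  have "antilex_list X = map (\<lambda>x. X - {x}) (map (\<lambda>j. sorted_list_of_set X ! (j - 1)) [1..<card X + 1])"
    unfolding antilex_list_def subs_def elem_def by simp
  also have "map (\<lambda>j. sorted_list_of_set X ! (j - 1)) [1..<card X + 1] = sorted_list_of_set X"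
    using map_upt_nth[of "sorted_list_of_set X"] by simp
  finally show ?thesis .
qed

lemma lex_alt: "lex_list X = rev (antilex_list X)"
  unfolding lex_list_def antilex_list_def by (simp add: rev_map)



definition ANTI :: "nat set list \<Rightarrow> nat set \<Rightarrow> bool" where
  "ANTI \<rho> X \<longleftrightarrow> (\<forall>a\<in>X. \<forall>b\<in>X. a < b \<longrightarrow> bef \<rho> (X - {a}) (X - {b}))"

definition LEX :: "nat set list \<Rightarrow> nat set \<Rightarrow> bool" where
  "LEX \<rho> X \<longleftrightarrow> (\<forall>a\<in>X. \<forall>b\<in>X. a < b \<longrightarrow> bef \<rho> (X - {b}) (X - {a}))"

lemma antilex_props:
  assumes "finite X"
  shows "distinct (antilex_list X)" "set (antilex_list X) = packet X"
proof -
  have "inj_on (\<lambda>x. X - {x}) X" unfolding inj_on_def by blast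
  then show "distinct (antilex_list X)" using assms by (simp add: antilex_alt distinct_map)
  show "set (antilex_list X) = packet X" using assms by (simp add: antilex_alt packet_alt)
qed

lemma anti_iff:
  assumes d: "distinct \<rho>" and f: "finite X" and sub: "packet X \<subseteq> set \<rho>"
  shows "restrict_order \<rho> (packet X) = antilex_list X \<longleftrightarrow> ANTI \<rho> X"
proof -
  let ?L = "sorted_list_of_set X"
  let ?f = "\<lambda>x. X - {x}"
  let ?RL = "restrict_order \<rho> (packet X)"
  have sL: "sorted_wrt (<) ?L" by (simp add: strict_sorted_list_of_set)
  have RL: "distinct ?RL" "set ?RL = packet X" "sorted_wrt (bef \<rho>) ?RL"
    using d sub sorted_wrt_filter[OF sorted_bef] unfolding restrict_order_def by auto
  have AL: "antilex_list X = map ?f ?L" using antilex_alt[OF f] .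
  show ?thesis
  proof
    assume e: "?RL = antilex_list X"
    show "ANTI \<rho> X" unfolding ANTI_def
    proof (intro ballI impI)
      fix a b assume ab: "a \<in> X" "b \<in> X" "a < b"
      have s: "sorted_wrt (\<lambda>x y. bef \<rho> (?f x) (?f y)) ?L"
        using RL(3) e AL by (simp add: sorted_wrt_map)
      obtain i where i: "i < length ?L" "?L ! i = a" using ab f by (metis in_set_conv_nth set_sorted_list_of_set)
      obtain j where j: "j < length ?L" "?L ! j = b" using ab f by (metis in_set_conv_nth set_sorted_list_of_set)
      have "i < j"
      proof (rule ccontr)
        assume "\<not> i < j"
        then have "j \<le> i" by simp
        then have "?L ! j \<le> ?L ! i" using sorted_nth_mono[of ?L j i] i by simp
        then show False using i j ab by simp
      qed
      then show "bef \<rho> (X - {a}) (X - {b})" using sorted_wrt_nth_less[OF s \<open>i < j\<close> j(1)] i j by simp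
    qed
  next
    assume A: "ANTI \<rho> X"
    have "sorted_wrt (\<lambda>x y. bef \<rho> (?f x) (?f y)) ?L"
      using sL
    proof (rule sorted_wrt_mono_rel[rotated])
      fix x y assume "x \<in> set ?L" "y \<in> set ?L" "x < y"
      then show "bef \<rho> (?f x) (?f y)" using A f unfolding ANTI_def by simp
    qed
    then have "sorted_wrt (bef \<rho>) (antilex_list X)" using AL by (simp add: sorted_wrt_map)
    then show "?RL = antilex_list X"
      using sorted_wrt_unique[OF RL(1) antilex_props(1)[OF f] _ RL(3)] RL(2) antilex_props(2)[OF f]
        bef_asym[OF d] by blast
  qed
qed

lemma lex_iff:
  assumes d: "distinct \<rho>" and f: "finite X" and sub: "packet X \<subseteq> set \<rho>"
  shows "restrict_order \<rho> (packet X) = lex_list X \<longleftrightarrow> LEX \<rho> X"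
proof -
  have "restrict_order \<rho> (packet X) = lex_list X \<longleftrightarrow> restrict_order (rev \<rho>) (packet X) = antilex_list X"
    unfolding lex_alt restrict_order_def by (metis rev_filter rev_rev_ident)
  also have "\<dots> \<longleftrightarrow> ANTI (rev \<rho>) X" using anti_iff[of "rev \<rho>" X] d f sub by simp
  also have "\<dots> \<longleftrightarrow> LEX \<rho> X" unfolding ANTI_def LEX_def bef_rev by simp
  finally show ?thesis .
qed

lemma Inv_fin: "X \<in> Inv w n m \<Longrightarrow> finite X \<and> card X = m \<and> X \<subseteq> {1..n}"
  unfolding Inv_def binom_def by (auto intro: finite_subset)

lemma binom_fin: "X \<in> binom n m \<Longrightarrow> finite X \<and> card X = m \<and> X \<subseteq> {1..n}"
  unfolding binom_def by (auto intro: finite_subset)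

lemma Inv_sub:
  assumes "X \<in> Inv w n m" "x \<in> X" shows "X - {x} \<in> Inv w n (m - 1)"
proof -
  have f: "finite X" "card X = m" "X \<subseteq> {1..n}" using Inv_fin[OF assms(1)] by auto
  have "card (X - {x}) = m - 1" using f assms(2) by simp
  moreover have "X - {x} \<subseteq> {1..n}" using f by blast
  moreover have "\<forall>a\<in>X - {x}. \<forall>b\<in>X - {x}. a < b \<longrightarrow> inv w b < inv w a"
    using assms(1) unfolding Inv_def by blast
  ultimately show ?thesis unfolding Inv_def binom_def by blast
qed

lemma packet_Inv: "X \<in> Inv w n (k + 1) \<Longrightarrow> packet X \<subseteq> Inv w n k"
proof
  fix A assume X: "X \<in> Inv w n (k + 1)" and "A \<in> packet X"
  then have "A \<in> (\<lambda>x. X - {x}) ` X" using Inv_fin[OF X] packet_alt by simp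
  then obtain x where "x \<in> X" "A = X - {x}" by (elim imageE) simp
  then show "A \<in> Inv w n k" using Inv_sub[OF X, of x] by simp
qed



lemma A_facts:
  assumes "\<rho> \<in> A_set w n k"
  shows "distinct \<rho>" "set \<rho> = Inv w n k" "\<And>A B. (A, B) \<in> P_ord w n k \<Longrightarrow> precedes \<rho> A B"
    "\<And>Y. Y \<in> Inv w n (k + 1) \<Longrightarrow> ANTI \<rho> Y \<or> LEX \<rho> Y"
proof -
  show d: "distinct \<rho>" and s: "set \<rho> = Inv w n k"
    using assms unfolding A_set_def total_order_of_def by auto
  show "\<And>A B. (A, B) \<in> P_ord w n k \<Longrightarrow> precedes \<rho> A B"
    using assms unfolding A_set_def by blast
  fix Y assume Y: "Y \<in> Inv w n (k + 1)"
  have "restrict_order \<rho> (packet Y) = lex_list Y \<or> restrict_order \<rho> (packet Y) = antilex_list Y"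
    using assms Y unfolding A_set_def by blast
  then show "ANTI \<rho> Y \<or> LEX \<rho> Y"
    using anti_iff[OF d] lex_iff[OF d] Inv_fin[OF Y] packet_Inv[OF Y] s by blast
qed

lemma Rev_iff:
  assumes "\<rho> \<in> A_set w n k" "Y \<in> Inv w n (k + 1)"
  shows "Y \<in> Rev n k w \<rho> \<longleftrightarrow> ANTI \<rho> Y"
  using anti_iff[OF A_facts(1)[OF assms(1)]] A_facts(2)[OF assms(1)] Inv_fin[OF assms(2)]
    packet_Inv[OF assms(2)] assms(2) unfolding Rev_def by auto

lemma cyc3: "distinct \<rho> \<Longrightarrow> bef \<rho> a b \<Longrightarrow> bef \<rho> b c \<Longrightarrow> bef \<rho> c a \<Longrightarrow> False"
  using bef_trans bef_irrefl by metis

lemma three: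
  assumes "\<not> (\<forall>a\<in>R. \<forall>b\<in>Z. a < b \<longrightarrow> b \<in> R)" "\<not> (\<forall>a\<in>R. \<forall>b\<in>Z. b < a \<longrightarrow> b \<in> R)"
    "R \<subseteq> Z"
  shows "\<exists>x\<in>Z. \<exists>y\<in>Z. \<exists>z\<in>Z. (x::nat) < y \<and> y < z \<and>
           ((x \<in> R \<and> y \<notin> R \<and> z \<in> R) \<or> (x \<notin> R \<and> y \<in> R \<and> z \<notin> R))"
proof -
  obtain a b where ab: "a \<in> R" "b \<in> Z" "a < b" "b \<notin> R" using assms(1) by blast
  obtain c d where cd: "d \<in> R" "c \<in> Z" "c < d" "c \<notin> R" using assms(2) by blast
  show ?thesis
  proof (cases "b < d")
    case True
    then show ?thesis using ab cd assms(3) by blast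
  next
    case False
    then have "d < b" using ab cd by (metis linorder_neqE_nat)
    then show ?thesis using ab cd assms(3) by blast
  qed
qed

lemma diff2: "X - {a} - {b} = X - {b} - {a}" by blast

lemma prefix_suffix:
  assumes A: "\<rho> \<in> A_set w n k" and Z: "Z \<in> Inv w n (k + 2)"
  shows "is_prefix_packet Z (Rev n k w \<rho> \<inter> packet Z) \<or> is_suffix_packet Z (Rev n k w \<rho> \<inter> packet Z)"
proof -
  have d: "distinct \<rho>" using A_facts[OF A] by simp
  have fZ: "finite Z" "card Z = k + 2" using Inv_fin[OF Z] by auto
  have ZI: "Z - {a} \<in> Inv w n (k + 1)" if "a \<in> Z" for a
    using Inv_sub[OF Z that] by simp
  define R where "R = {a \<in> Z. ANTI \<rho> (Z - {a})}"
  have RZ: "R \<subseteq> Z" unfolding R_def by auto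
  have notR: "LEX \<rho> (Z - {a})" if "a \<in> Z" "a \<notin> R" for a
    using A_facts(4)[OF A ZI[OF that(1)]] that unfolding R_def by auto
  have inR: "ANTI \<rho> (Z - {a})" if "a \<in> R" for a using that unfolding R_def by auto
  have RP: "Rev n k w \<rho> \<inter> packet Z = (\<lambda>a. Z - {a}) ` R"
  proof -
    have "Rev n k w \<rho> \<inter> packet Z = {Y \<in> (\<lambda>a. Z - {a}) ` Z. Y \<in> Rev n k w \<rho>}"
      using packet_alt[OF fZ(1)] by auto
    also have "\<dots> = (\<lambda>a. Z - {a}) ` R"
      unfolding R_def using Rev_iff[OF A ZI] by auto
    finally show ?thesis .
  qed
  have pat: False if xyz: "x \<in> Z" "y \<in> Z" "z \<in> Z" "x < y" "y < z"
     and P: "(x \<in> R \<and> y \<notin> R \<and> z \<in> R) \<or> (x \<notin> R \<and> y \<in> R \<and> z \<notin> R)" for x y z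
  proof -
    let ?XY = "Z - {x} - {y}" and ?XZ = "Z - {x} - {z}" and ?YZ = "Z - {y} - {z}"
    have e: "Z - {y} - {x} = ?XY" "Z - {z} - {x} = ?XZ" "Z - {z} - {y} = ?YZ" by blast+
    have m: "y \<in> Z - {x}" "z \<in> Z - {x}" "x \<in> Z - {y}" "z \<in> Z - {y}" "x \<in> Z - {z}" "y \<in> Z - {z}"
      using xyz by auto
    show False using P
    proof
      assume h: "x \<in> R \<and> y \<notin> R \<and> z \<in> R"
      have "bef \<rho> ?XY ?XZ" using inR[of x] h m xyz unfolding ANTI_def by blast
      moreover have "bef \<rho> (Z - {y} - {z}) (Z - {y} - {x})"
        using notR[of y] h m xyz xyz(4,5) unfolding LEX_def by (meson order.strict_trans)
      moreover have "bef \<rho> (Z - {z} - {x}) (Z - {z} - {y})"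
        using inR[of z] h m xyz unfolding ANTI_def by blast
      ultimately show False using cyc3[OF d] e by metis
    next
      assume h: "x \<notin> R \<and> y \<in> R \<and> z \<notin> R"
      have "bef \<rho> ?XZ ?XY" using notR[of x] h m xyz unfolding LEX_def by blast
      moreover have "bef \<rho> (Z - {y} - {x}) (Z - {y} - {z})"
        using inR[of y] h m xyz unfolding ANTI_def by (meson order.strict_trans)
      moreover have "bef \<rho> (Z - {z} - {y}) (Z - {z} - {x})"
        using notR[of z] h m xyz unfolding LEX_def by blast
      ultimately show False using cyc3[OF d] e by metis
    qed
  qed
  have ud: "(\<forall>a\<in>R. \<forall>b\<in>Z. a < b \<longrightarrow> b \<in> R) \<or> (\<forall>a\<in>R. \<forall>b\<in>Z. b < a \<longrightarrow> b \<in> R)"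
    using three[OF _ _ RZ] pat by blast
  have subsimg: "subs Z ` J = (\<lambda>a. Z - {a}) ` (elem Z ` J)" for J
    unfolding subs_def by (simp add: image_image)
  have fR: "finite R" using RZ fZ(1) finite_subset by blast
  from ud show ?thesis
  proof
    assume up: "\<forall>a\<in>R. \<forall>b\<in>Z. a < b \<longrightarrow> b \<in> R"
    show ?thesis
    proof (cases "R = {}")
      case True
      then have "Rev n k w \<rho> \<inter> packet Z = subs Z ` {card Z + 1..card Z}" using RP by simp
      then show ?thesis unfolding is_prefix_packet_def by (intro disjI1 exI[of _ "card Z + 1"]) simp
    next
      case False
      define r where "r = Min R"
      have rR: "r \<in> R" using False fR unfolding r_def by simp
      have rZ: "r \<in> Z" using rR RZ by auto
      have "elem Z ` {rank Z r + 1..card Z} = {x \<in> Z. rank Z x + 1 \<in> {rank Z r + 1..card Z}}"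
        by (rule elem_image[OF fZ(1)]) auto
      also have "\<dots> = {x \<in> Z. r \<le> x}"
        using rank_le_iff[OF fZ(1) rZ] rank_less_card[OF fZ(1)] by (auto simp: Suc_le_eq less_Suc_eq_le)
      also have "\<dots> = R"
      proof
        show "{x \<in> Z. r \<le> x} \<subseteq> R" using up rR by (auto simp: le_less)
        show "R \<subseteq> {x \<in> Z. r \<le> x}" using RZ fR unfolding r_def by auto
      qed
      finally have "Rev n k w \<rho> \<inter> packet Z = subs Z ` {rank Z r + 1..card Z}"
        using RP subsimg by simp
      moreover have "rank Z r + 1 \<le> card Z + 1" using rank_less_card[OF fZ(1) rZ] by simp
      ultimately show ?thesis unfolding is_prefix_packet_def
        by (intro disjI1 exI[of _ "rank Z r + 1"]) simp
    qed
  next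
    assume down: "\<forall>a\<in>R. \<forall>b\<in>Z. b < a \<longrightarrow> b \<in> R"
    show ?thesis
    proof (cases "R = {}")
      case True
      then have "Rev n k w \<rho> \<inter> packet Z = subs Z ` {1..0}" using RP by simp
      then show ?thesis unfolding is_suffix_packet_def by (intro disjI2 exI[of _ 0]) simp
    next
      case False
      define r where "r = Max R"
      have rR: "r \<in> R" using False fR unfolding r_def by simp
      have rZ: "r \<in> Z" using rR RZ by auto
      have rl: "rank Z r + 1 \<le> card Z" using rank_less_card[OF fZ(1) rZ] by simp
      have "elem Z ` {1..rank Z r + 1} = {x \<in> Z. rank Z x + 1 \<in> {1..rank Z r + 1}}"
        by (rule elem_image[OF fZ(1)]) (use rl in auto)
      also have "\<dots> = {x \<in> Z. x \<le> r}"
        using rank_le_iff[OF fZ(1) _ rZ] by auto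
      also have "\<dots> = R"
      proof
        show "{x \<in> Z. x \<le> r} \<subseteq> R" using down rR by (auto simp: le_less)
        show "R \<subseteq> {x \<in> Z. x \<le> r}" using RZ fR unfolding r_def by auto
      qed
      finally have "Rev n k w \<rho> \<inter> packet Z = subs Z ` {1..rank Z r + 1}"
        using RP subsimg by simp
      then show ?thesis unfolding is_suffix_packet_def
        by (intro disjI2 exI[of _ "rank Z r + 1"]) (use rl in simp)
    qed
  qed
qed



lemma gen_step:
  assumes A: "\<rho> \<in> A_set w n k" and k1: "1 \<le> k"
    and G: "(Ag, Bg) \<in> P_gen w n (k + 1)" and B: "Bg \<in> Rev n k w \<rho>"
  shows "Ag \<in> Rev n k w \<rho>"
proof -
  have d: "distinct \<rho>" using A_facts[OF A] by simp
  obtain Z i where Zb: "Z \<in> binom n (k + 1 + 1)" and quZ: "quasi_inv w Z" and i: "1 \<le> i" "i \<le> k + 1"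
    and pk: "packet Z \<inter> Inv w n (k + 1) = {subs Z i, subs Z (i + 1)}"
    and sg: "(if odd (k + 1 - i) then (Ag, Bg) = (subs Z i, subs Z (i + 1))
                        else (Ag, Bg) = (subs Z (i + 1), subs Z i))"
    using G unfolding P_gen_def by blast
  have fZ: "finite Z" "card Z = k + 2" "Z \<subseteq> {1..n}" using binom_fin[OF Zb] by auto
  define p where "p = elem Z i"
  define q where "q = elem Z (i + 1)"
  have pZ: "p \<in> Z" and rp: "rank Z p = i - 1" using elem_in[OF fZ(1)] rank_elem[OF fZ(1)] i fZ
    unfolding p_def by auto
  have qZ: "q \<in> Z" and rq: "rank Z q = i" using elem_in[OF fZ(1)] rank_elem[OF fZ(1)] i fZ
    unfolding q_def by auto
  have pq: "p < q" using rank_le_iff[OF fZ(1) qZ pZ] rp rq i by auto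
  have btw: "\<not> (p < c \<and> c < q)" if "c \<in> Z" for c
    using rank_mono[OF fZ(1) pZ that] rank_mono[OF fZ(1) that qZ] rp rq i by auto
  have subsp: "subs Z i = Z - {p}" and subsq: "subs Z (i + 1) = Z - {q}"
    unfolding subs_def p_def q_def by auto
  have ZpI: "Z - {p} \<in> Inv w n (k + 1)" and ZqI: "Z - {q} \<in> Inv w n (k + 1)"
    using pk subsp subsq by blast+
  have invp: "\<forall>a\<in>Z - {p}. \<forall>b\<in>Z - {p}. a < b \<longrightarrow> inv w b < inv w a"
    using ZpI unfolding Inv_def by blast
  have invq: "\<forall>a\<in>Z - {q}. \<forall>b\<in>Z - {q}. a < b \<longrightarrow> inv w b < inv w a"
    using ZqI unfolding Inv_def by blast
  have onlypq: "x = p \<and> y = q" if "x \<in> Z" "y \<in> Z" "x < y" "\<not> inv w y < inv w x" for x y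
  proof -
    have "x = p \<or> y = p" using invp that by blast
    moreover have "x = q \<or> y = q" using invq that by blast
    ultimately show ?thesis using that pq by auto
  qed
  have npq: "\<not> inv w q < inv w p"
  proof -
    have "card {(x, y). x \<in> Z \<and> y \<in> Z \<and> x < y \<and> \<not> inv w y < inv w x} = 1"
      using quZ unfolding quasi_inv_def by simp
    then have "{(x, y). x \<in> Z \<and> y \<in> Z \<and> x < y \<and> \<not> inv w y < inv w x} \<noteq> {}"
      by (metis card.empty zero_neq_one)
    then obtain x y where "x \<in> Z" "y \<in> Z" "x < y" "\<not> inv w y < inv w x"
      by blast
    then show ?thesis using onlypq by blast
  qed
  have Dc: "if odd (k - (rank (Z - {c}) p + 1))
            then bef \<rho> (Z - {c} - {p}) (Z - {c} - {q})
            else bef \<rho> (Z - {c} - {q}) (Z - {c} - {p})"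
    if cZ: "c \<in> Z" "c \<noteq> p" "c \<noteq> q" for c
  proof -
    define Y where "Y = Z - {c}"
    have fY: "finite Y" "card Y = k + 1" "Y \<subseteq> {1..n}" using fZ cZ unfolding Y_def by auto
    have Yb: "Y \<in> binom n (k + 1)" using fY unfolding binom_def by auto
    have pY: "p \<in> Y" and qY: "q \<in> Y" using pZ qZ cZ unfolding Y_def by auto
    have "{(x, y). x \<in> Y \<and> y \<in> Y \<and> x < y \<and> \<not> inv w y < inv w x} = {(p, q)}"
      using onlypq npq pY qY pq unfolding Y_def by auto
    then have qY': "quasi_inv w Y" unfolding quasi_inv_def by simp
    have YpI: "Y - {p} \<in> Inv w n k" using Inv_sub[OF ZpI, of c] cZ unfolding Y_def by (simp add: diff2)
    have YqI: "Y - {q} \<in> Inv w n k" using Inv_sub[OF ZqI, of c] cZ unfolding Y_def by (simp add: diff2)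
    have notI: "Y - {y} \<notin> Inv w n k" if "y \<in> Y" "y \<noteq> p" "y \<noteq> q" for y
      using that pY qY pq npq unfolding Inv_def by blast
    have pkY: "packet Y \<inter> Inv w n k = {Y - {p}, Y - {q}}"
      using packet_alt[OF fY(1)] YpI YqI notI pY qY by auto
    define j where "j = rank Y p + 1"
    have "{y \<in> Y. y < q} = insert p {y \<in> Y. y < p}"
      using btw pq pY unfolding Y_def by (auto, meson linorder_neqE_nat)
    then have rYq: "rank Y q = rank Y p + 1" unfolding rank_def using fY(1) by simp
    have sj: "subs Y j = Y - {p}" "subs Y (j + 1) = Y - {q}"
      unfolding subs_def j_def using elem_rank[OF fY(1) pY] elem_rank[OF fY(1) qY] rYq by auto
    have j: "1 \<le> j" "j \<le> k" using rank_less_card[OF fY(1) qY] rYq fY unfolding j_def by auto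
    have wit: "\<exists>X\<in>binom n (k + 1). quasi_inv w X \<and> (\<exists>i. 1 \<le> i \<and> i \<le> k \<and>
        packet X \<inter> Inv w n k = {subs X i, subs X (i + 1)} \<and>
        (if odd (k - i) then (a, b) = (subs X i, subs X (i + 1)) else (a, b) = (subs X (i + 1), subs X i)))"
      if "if odd (k - j) then (a, b) = (Y - {p}, Y - {q}) else (a, b) = (Y - {q}, Y - {p})" for a b
      apply (rule bexI[OF _ Yb])
      apply (rule conjI[OF qY'])
      apply (rule exI[of _ j])
      using j pkY sj that by simp
    have "(if odd (k - j) then (Y - {p}, Y - {q}) else (Y - {q}, Y - {p})) \<in> P_gen w n k"
    proof (cases "odd (k - j)")
      case True
      then show ?thesis using wit[of "Y - {p}" "Y - {q}"] unfolding P_gen_def by simp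
    next
      case False
      then show ?thesis using wit[of "Y - {q}" "Y - {p}"] unfolding P_gen_def by simp
    qed
    then have "(if odd (k - j) then (Y - {p}, Y - {q}) else (Y - {q}, Y - {p})) \<in> P_ord w n k"
      unfolding P_ord_def using YpI YqI by (auto split: if_splits)
    moreover have "Y - {p} \<noteq> Y - {q}" using pY qY pq by auto
    ultimately show ?thesis using A_facts(3)[OF A] unfolding precedes_iff j_def Y_def
      by (auto split: if_splits)
  qed
  obtain c where cZ: "c \<in> Z" "c \<noteq> p" "c \<noteq> q"
  proof -
    have "card (Z - {p, q}) = k" using fZ pZ qZ pq by (simp add: card_Diff_subset)
    then have "Z - {p, q} \<noteq> {}" using k1 by (metis card.empty not_one_le_zero)
    then show ?thesis using that by blast
  qed
  have rc: "rank (Z - {c}) p = (if c < p then rank Z p - 1 else rank Z p)"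
  proof -
    have e: "{y \<in> Z - {c}. y < p} = {y \<in> Z. y < p} - {c}" by auto
    show ?thesis unfolding rank_def e using fZ(1) cZ by (auto simp: card_Diff_singleton_if)
  qed
  have c_cases: "c < p \<or> q < c" using btw[OF cZ(1)] cZ by auto
  have rpos: "1 \<le> rank Z p" if "c < p"
  proof -
    have "c \<in> {y \<in> Z. y < p}" using that cZ by auto
    then have "card {y \<in> Z. y < p} \<noteq> 0" using fZ(1) by (metis (no_types, lifting) card_0_eq empty_iff finite_subset mem_Collect_eq subsetI)
    then show ?thesis unfolding rank_def by (metis One_nat_def Suc_leI neq0_conv)
  qed
  have ik: "i \<le> k" if "q < c"
    using rank_mono[OF fZ(1) qZ cZ(1) that] rank_less_card[OF fZ(1) cZ(1)] rq fZ by simp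
  have sgn_lo: "odd (k - (rank (Z - {c}) p + 1)) \<longleftrightarrow> odd (k + 1 - i)" if "c < p"
  proof -
    have "k - (rank (Z - {c}) p + 1) = k + 1 - i" using rc that rpos[OF that] rp i by simp
    then show ?thesis by simp
  qed
  have sgn_hi: "odd (k - (rank (Z - {c}) p + 1)) \<longleftrightarrow> \<not> odd (k + 1 - i)" if "q < c"
  proof -
    have "k - (rank (Z - {c}) p + 1) = k - i" "k + 1 - i = Suc (k - i)"
      using rc that pq rp i ik[OF that] by auto
    then show ?thesis by simp
  qed
  let ?PQ = "Z - {p} - {q}" and ?PC = "Z - {p} - {c}" and ?QC = "Z - {q} - {c}"
  have e1: "Z - {c} - {p} = ?PC" "Z - {c} - {q} = ?QC" "Z - {q} - {p} = ?PQ" by blast+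
  have D: "if odd (k - (rank (Z - {c}) p + 1)) then bef \<rho> ?PC ?QC else bef \<rho> ?QC ?PC"
    using Dc[OF cZ] by (simp only: e1)
  have mem: "q \<in> Z - {p}" "c \<in> Z - {p}" "p \<in> Z - {q}" "c \<in> Z - {q}" using pZ qZ cZ pq by auto
  have Lp: "LEX \<rho> (Z - {p})" if "\<not> ANTI \<rho> (Z - {p})" using A_facts(4)[OF A ZpI] that by blast
  have Lq: "LEX \<rho> (Z - {q})" if "\<not> ANTI \<rho> (Z - {q})" using A_facts(4)[OF A ZqI] that by blast
  show ?thesis
  proof (cases "odd (k + 1 - i)")
    case True
    then have AB: "Ag = Z - {p}" "Bg = Z - {q}" using sg subsp subsq by auto
    have aq: "ANTI \<rho> (Z - {q})" using B AB Rev_iff[OF A ZqI] by simp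
    show ?thesis
    proof (rule ccontr)
      assume "Ag \<notin> Rev n k w \<rho>"
      then have lp: "LEX \<rho> (Z - {p})" using Lp AB Rev_iff[OF A ZpI] by simp
      from c_cases show False
      proof
        assume cp: "c < p"
        have "bef \<rho> ?PQ ?PC" using lp mem cp pq unfolding LEX_def by simp
        moreover have "bef \<rho> ?QC ?PQ"
        proof -
          have "bef \<rho> ?QC (Z - {q} - {p})" using aq mem cp unfolding ANTI_def by simp
          then show ?thesis by (simp only: e1)
        qed
        moreover have "bef \<rho> ?PC ?QC" using D sgn_lo[OF cp] True by simp
        ultimately show False using cyc3[OF d] by blast
      next
        assume qc: "q < c"
        have "bef \<rho> ?PC ?PQ" using lp mem qc unfolding LEX_def by simp
        moreover have "bef \<rho> ?PQ ?QC"
        proof -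
          have "bef \<rho> (Z - {q} - {p}) ?QC" using aq mem qc pq unfolding ANTI_def by simp
          then show ?thesis by (simp only: e1)
        qed
        moreover have "bef \<rho> ?QC ?PC" using D sgn_hi[OF qc] True by simp
        ultimately show False using cyc3[OF d] by blast
      qed
    qed
  next
    case False
    then have AB: "Ag = Z - {q}" "Bg = Z - {p}" using sg subsp subsq by auto
    have ap: "ANTI \<rho> (Z - {p})" using B AB Rev_iff[OF A ZpI] by simp
    show ?thesis
    proof (rule ccontr)
      assume "Ag \<notin> Rev n k w \<rho>"
      then have lq: "LEX \<rho> (Z - {q})" using Lq AB Rev_iff[OF A ZqI] by simp
      from c_cases show False
      proof
        assume cp: "c < p"
        have "bef \<rho> ?PC ?PQ" using ap mem cp pq unfolding ANTI_def by simp
        moreover have "bef \<rho> ?PQ ?QC"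
        proof -
          have "bef \<rho> (Z - {q} - {p}) ?QC" using lq mem cp unfolding LEX_def by simp
          then show ?thesis by (simp only: e1)
        qed
        moreover have "bef \<rho> ?QC ?PC" using D sgn_lo[OF cp] False by simp
        ultimately show False using cyc3[OF d] by blast
      next
        assume qc: "q < c"
        have "bef \<rho> ?PQ ?PC" using ap mem qc unfolding ANTI_def by simp
        moreover have "bef \<rho> ?QC ?PQ"
        proof -
          have "bef \<rho> ?QC (Z - {q} - {p})" using lq mem qc pq unfolding LEX_def by simp
          then show ?thesis by (simp only: e1)
        qed
        moreover have "bef \<rho> ?PC ?QC" using D sgn_hi[OF qc] False by simp
        ultimately show False using cyc3[OF d] by blast
      qed
    qed
  qed
qed

lemma lower_ideal:
  assumes A: "\<rho> \<in> A_set w n k" and k1: "1 \<le> k"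
    and P: "(Ag, Bg) \<in> P_ord w n (k + 1)" and B: "Bg \<in> Rev n k w \<rho>"
  shows "Ag \<in> Rev n k w \<rho>"
proof -
  have "(Ag, Bg) \<in> (P_gen w n (k + 1))\<^sup>*" using P unfolding P_ord_def by simp
  then show ?thesis using B
  proof (induction rule: converse_rtrancl_induct)
    case base
    then show ?case .
  next
    case (step y z)
    then show ?case using gen_step[OF A k1] by blast
  qed
qed



lemma restrict_append: "restrict_order (xs @ ys) S = restrict_order xs S @ restrict_order ys S"
  unfolding restrict_order_def by simp

lemma restrict_rev: "restrict_order (rev xs) S = rev (restrict_order xs S)"
  unfolding restrict_order_def by (simp add: rev_filter)

lemma flip_A:
  assumes A: "\<rho> \<in> A_set w n k" and r: "\<rho> = xs @ m @ ys" and s: "\<sigma> = xs @ rev m @ ys"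
    and noP: "\<And>C D. C \<in> set m \<Longrightarrow> D \<in> set m \<Longrightarrow> C \<noteq> D \<Longrightarrow> (C, D) \<notin> P_ord w n k"
    and pk: "\<And>Y. Y \<in> Inv w n (k + 1) \<Longrightarrow> restrict_order \<sigma> (packet Y) = restrict_order \<rho> (packet Y)
               \<or> restrict_order \<sigma> (packet Y) = rev (restrict_order \<rho> (packet Y))"
  shows "\<sigma> \<in> A_set w n k"
proof -
  have d: "distinct \<rho>" and st: "set \<rho> = Inv w n k" using A_facts[OF A] by auto
  have ds: "distinct \<sigma>" and sts: "set \<sigma> = Inv w n k" using d st r s by auto
  have P: "precedes \<sigma> C D" if CD: "(C, D) \<in> P_ord w n k" for C D
  proof -
    have "precedes \<rho> C D" using A_facts(3)[OF A CD] .
    then have "(C = D \<and> C \<in> set \<rho>) \<or> bef \<rho> C D" using precedes_iff by blast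
    then show ?thesis
    proof
      assume "C = D \<and> C \<in> set \<rho>"
      then show ?thesis using st sts precedes_iff by auto
    next
      assume b: "bef \<rho> C D"
      then have "C \<noteq> D" using bef_irrefl[OF d] by blast
      then have "\<not> (C \<in> set m \<and> D \<in> set m)" using noP CD by blast
      then have "bef \<sigma> C D" using bef_flip[of C m D xs ys] b r s by simp
      then show ?thesis using precedes_iff by blast
    qed
  qed
  have L: "restrict_order \<sigma> (packet Y) = lex_list Y \<or> restrict_order \<sigma> (packet Y) = antilex_list Y"
    if Y: "Y \<in> Inv w n (k + 1)" for Y
  proof -
    have "restrict_order \<rho> (packet Y) = lex_list Y \<or> restrict_order \<rho> (packet Y) = antilex_list Y"
      using A Y unfolding A_set_def by blast
    then show ?thesis using pk[OF Y] lex_alt[of Y] by auto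
  qed
  show ?thesis unfolding A_set_def total_order_of_def using ds sts P L by blast
qed

lemma commute_sym: "commute w n k A B \<Longrightarrow> commute w n k B A"
  unfolding commute_def by blast

lemma swap_step:
  assumes A: "\<rho> \<in> A_set w n k" and r: "\<rho> = xs @ [a, b] @ ys" and s: "\<sigma> = xs @ rev [a, b] @ ys"
    and c: "commute w n k a b"
  shows "\<sigma> \<in> A_set w n k \<and> Rev n k w \<rho> = Rev n k w \<sigma>"
proof -
  have same: "restrict_order \<sigma> (packet Y) = restrict_order \<rho> (packet Y)" if Y: "Y \<in> Inv w n (k + 1)" for Y
  proof -
    have "Y \<in> binom n (k + 1)" using Y unfolding Inv_def by auto
    then have "\<not> (a \<in> packet Y \<and> b \<in> packet Y)" using c unfolding commute_def by blast
    then show ?thesis using r s unfolding restrict_order_def by auto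
  qed
  have "\<sigma> \<in> A_set w n k"
  proof (rule flip_A[OF A r s])
    fix C D assume "C \<in> set [a, b]" "D \<in> set [a, b]" "C \<noteq> D"
    then show "(C, D) \<notin> P_ord w n k" using c unfolding commute_def by auto
  next
    fix Y assume "Y \<in> Inv w n (k + 1)"
    then show "restrict_order \<sigma> (packet Y) = restrict_order \<rho> (packet Y)
               \<or> restrict_order \<sigma> (packet Y) = rev (restrict_order \<rho> (packet Y))"
      using same by blast
  qed
  moreover have "Rev n k w \<rho> = Rev n k w \<sigma>" unfolding Rev_def using same by auto
  ultimately show ?thesis by blast
qed

lemma comm_step:
  assumes A: "\<rho> \<in> A_set w n k" and st: "(\<rho>, \<sigma>) \<in> comm_swap w n k \<union> (comm_swap w n k)\<inverse>"
  shows "\<sigma> \<in> A_set w n k \<and> Rev n k w \<rho> = Rev n k w \<sigma>"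
  using st
proof
  assume "(\<rho>, \<sigma>) \<in> comm_swap w n k"
  then obtain xs a b ys where "commute w n k a b" "\<rho> = xs @ [a, b] @ ys" "\<sigma> = xs @ [b, a] @ ys"
    unfolding comm_swap_def by blast
  then show ?thesis using swap_step[OF A, of xs a b ys \<sigma>] by simp
next
  assume "(\<rho>, \<sigma>) \<in> (comm_swap w n k)\<inverse>"
  then obtain xs a b ys where "commute w n k a b" "\<sigma> = xs @ [a, b] @ ys" "\<rho> = xs @ [b, a] @ ys"
    unfolding comm_swap_def by blast
  then show ?thesis using swap_step[OF A, of xs b a ys] commute_sym by simp
qed

lemma part_b:
  assumes A: "\<rho> \<in> A_set w n k" and e: "comm_equiv w n k \<sigma> \<rho>"
  shows "\<sigma> \<in> A_set w n k \<and> Rev n k w \<rho> = Rev n k w \<sigma>"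
proof -
  have "(\<sigma>, \<rho>) \<in> (comm_swap w n k \<union> (comm_swap w n k)\<inverse>)\<^sup>*" using e unfolding comm_equiv_def .
  then show ?thesis
  proof (induction rule: converse_rtrancl_induct)
    case base
    then show ?case using A by simp
  next
    case (step y z)
    then have "(z, y) \<in> comm_swap w n k \<union> (comm_swap w n k)\<inverse>" by blast
    then show ?case using comm_step[of z w n k y] step by simp
  qed
qed



lemma gen_facts:
  assumes "(A, B) \<in> P_gen w n k"
  shows "\<exists>Z\<in>binom n (k + 1). quasi_inv w Z \<and> A \<in> packet Z \<and> B \<in> packet Z
           \<and> A \<in> Inv w n k \<and> B \<in> Inv w n k \<and> A \<noteq> B"
proof -
  obtain Z i where Zb: "Z \<in> binom n (k + 1)" and qZ: "quasi_inv w Z" and i: "1 \<le> i" "i \<le> k"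
    and pk: "packet Z \<inter> Inv w n k = {subs Z i, subs Z (i + 1)}"
    and sg: "(if odd (k - i) then (A, B) = (subs Z i, subs Z (i + 1))
                        else (A, B) = (subs Z (i + 1), subs Z i))"
    using assms unfolding P_gen_def by blast
  have fZ: "finite Z" "card Z = k + 1" using binom_fin[OF Zb] by auto
  have e: "elem Z i \<in> Z" "elem Z (i + 1) \<in> Z" "rank Z (elem Z i) = i - 1" "rank Z (elem Z (i + 1)) = i"
    using elem_in[OF fZ(1)] rank_elem[OF fZ(1)] i fZ by auto
  then have "elem Z i \<noteq> elem Z (i + 1)" using i by auto
  then have ne: "subs Z i \<noteq> subs Z (i + 1)" unfolding subs_def using e by blast
  have AB: "{A, B} = {subs Z i, subs Z (i + 1)}" "A \<noteq> B" using sg ne by (auto split: if_splits)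
  show ?thesis using Zb qZ pk AB by blast
qed

lemma Inv_not_quasi:
  assumes "X \<in> Inv w n m" shows "\<not> quasi_inv w X"
proof -
  have "{(x, y). x \<in> X \<and> y \<in> X \<and> x < y \<and> \<not> inv w y < inv w x} = {}"
    using assms unfolding Inv_def by auto
  then show ?thesis unfolding quasi_inv_def by (metis card.empty zero_neq_one)
qed

lemma part_c:
  assumes A: "\<rho> \<in> A_set w n k" and k1: "1 \<le> k" and X: "X \<in> Inv w n (k + 1)"
    and r: "\<rho> = xs @ ys @ zs" and ys: "set ys = packet X" and s: "\<sigma> = xs @ rev ys @ zs"
  shows "\<sigma> \<in> A_set w n k \<and> (Rev n k w \<sigma> - Rev n k w \<rho>) \<union> (Rev n k w \<rho> - Rev n k w \<sigma>) = {X}"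
proof -
  have d: "distinct \<rho>" and st: "set \<rho> = Inv w n k" using A_facts[OF A] by auto
  have fX: "finite X" "card X = k + 1" using Inv_fin[OF X] by auto
  have noP: "(C, D) \<notin> P_ord w n k" if CD: "C \<in> set ys" "D \<in> set ys" "C \<noteq> D" for C D
  proof
    assume P: "(C, D) \<in> P_ord w n k"
    then have "(C, D) \<in> (P_gen w n k)\<^sup>*" and DI: "D \<in> Inv w n k" unfolding P_ord_def by auto
    then obtain c1 where g: "(C, c1) \<in> P_gen w n k" and g2: "(c1, D) \<in> (P_gen w n k)\<^sup>*"
      using CD(3) by (metis converse_rtranclE)
    obtain Z where Z: "Z \<in> binom n (k + 1)" "quasi_inv w Z" "C \<in> packet Z" "c1 \<in> packet Z"
      "C \<in> Inv w n k" "c1 \<in> Inv w n k" "C \<noteq> c1"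
      using gen_facts[OF g] by blast
    have "(C, c1) \<in> P_ord w n k" using g Z unfolding P_ord_def by auto
    then have b1: "bef \<rho> C c1" using A_facts(3)[OF A] precedes_iff Z(7) by blast
    have "(c1, D) \<in> P_ord w n k" using g2 Z DI unfolding P_ord_def by auto
    then have p2: "precedes \<rho> c1 D" using A_facts(3)[OF A] by blast
    have c1ys: "c1 \<in> set ys"
    proof -
      have "c1 \<in> set xs \<or> c1 \<in> set ys \<or> c1 \<in> set zs" using Z(6) st r by auto
      moreover have "c1 \<notin> set xs"
      proof
        assume "c1 \<in> set xs"
        then have "bef \<rho> c1 C" using CD(1) r bef_append[of xs "ys @ zs" c1 C] by auto
        then show False using bef_asym[OF d] b1 by blast
      qed
      moreover have "c1 \<notin> set zs"
      proof
        assume cz: "c1 \<in> set zs"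
        then have "bef \<rho> D c1" using CD(2) r bef_append[of "xs @ ys" zs D c1] by auto
        moreover have "c1 \<noteq> D" using cz CD(2) d r by auto
        ultimately show False using p2 precedes_iff bef_asym[OF d] by blast
      qed
      ultimately show ?thesis by blast
    qed
    have "X = Z" using packet_inter[OF fX(1) _ _ _ Z(3) Z(4) Z(7)] CD(1) c1ys ys binom_fin[OF Z(1)]
      by blast
    then show False using Inv_not_quasi[OF X] Z(2) by simp
  qed
  have rX: "restrict_order \<rho> (packet X) = ys" and sX: "restrict_order \<sigma> (packet X) = rev ys"
  proof -
    have "restrict_order xs (packet X) = []" "restrict_order zs (packet X) = []"
      using d r ys unfolding restrict_order_def by (auto simp: filter_empty_conv)
    moreover have "restrict_order ys (packet X) = ys" using ys unfolding restrict_order_def by simp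
    ultimately show "restrict_order \<rho> (packet X) = ys" "restrict_order \<sigma> (packet X) = rev ys"
      using r s by (simp_all add: restrict_append restrict_rev)
  qed
  have oth: "restrict_order \<sigma> (packet Y) = restrict_order \<rho> (packet Y)"
    if Y: "Y \<in> Inv w n (k + 1)" "Y \<noteq> X" for Y
  proof -
    have fY: "finite Y" using Inv_fin[OF Y(1)] by auto
    let ?l = "restrict_order ys (packet Y)"
    have "distinct ?l" using d r unfolding restrict_order_def by auto
    moreover have "\<forall>a\<in>set ?l. \<forall>b\<in>set ?l. a = b"
    proof (intro ballI)
      fix a b assume "a \<in> set ?l" "b \<in> set ?l"
      then have "a \<in> packet X" "b \<in> packet X" "a \<in> packet Y" "b \<in> packet Y"
        using ys unfolding restrict_order_def by auto
      then show "a = b" using packet_inter[OF fX(1) fY] Y(2) by blast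
    qed
    ultimately have "rev ?l = ?l" by (rule len_le1)
    then show ?thesis using r s by (simp add: restrict_append restrict_rev)
  qed
  have sA: "\<sigma> \<in> A_set w n k"
  proof (rule flip_A[OF A r s])
    fix C D assume "C \<in> set ys" "D \<in> set ys" "C \<noteq> D"
    then show "(C, D) \<notin> P_ord w n k" using noP by blast
  next
    fix Y assume "Y \<in> Inv w n (k + 1)"
    then show "restrict_order \<sigma> (packet Y) = restrict_order \<rho> (packet Y)
               \<or> restrict_order \<sigma> (packet Y) = rev (restrict_order \<rho> (packet Y))"
      using oth rX sX by (cases "Y = X") auto
  qed
  have neq: "lex_list X \<noteq> antilex_list X"
  proof -
    have "length (antilex_list X) = k + 1" unfolding antilex_list_def using fX by simp
    then show ?thesis using rev_neq[OF antilex_props(1)[OF fX(1)]] k1 lex_alt by simp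
  qed
  have lx: "ys = lex_list X \<or> ys = antilex_list X" using A X rX unfolding A_set_def by blast
  have Xd: "X \<in> Rev n k w \<sigma> \<longleftrightarrow> X \<notin> Rev n k w \<rho>"
    unfolding Rev_def using rX sX lx neq X lex_alt[of X] by auto
  have Yd: "Y \<in> Rev n k w \<sigma> \<longleftrightarrow> Y \<in> Rev n k w \<rho>" if "Y \<noteq> X" for Y
  proof (cases "Y \<in> Inv w n (k + 1)")
    case True
    then have "restrict_order \<sigma> (packet Y) = restrict_order \<rho> (packet Y)" using oth that by blast
    then show ?thesis unfolding Rev_def using True by simp
  next
    case False
    then show ?thesis unfolding Rev_def by simp
  qed
  have "(Rev n k w \<sigma> - Rev n k w \<rho>) \<union> (Rev n k w \<rho> - Rev n k w \<sigma>) = {X}"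
    using Xd Yd by blast
  then show ?thesis using sA by blast
qed


theorem lemma3p8:
  fixes n k :: nat and w :: "nat \<Rightarrow> nat" and \<rho> :: "nat set list"
  assumes "0 < n" and "1 \<le> k" and "k \<le> n"
    and "w permutes {1..n}"
    and "\<rho> \<in> A_set w n k"
  shows "(Rev n k w \<rho> \<subseteq> Inv w n (k + 1)
          \<and> (\<forall>A B. (A, B) \<in> P_ord w n (k + 1) \<and> B \<in> Rev n k w \<rho> \<longrightarrow> A \<in> Rev n k w \<rho>)
          \<and> (\<forall>X \<in> Inv w n (k + 2).
               is_prefix_packet X (Rev n k w \<rho> \<inter> packet X)
             \<or> is_suffix_packet X (Rev n k w \<rho> \<inter> packet X)))
       \<and> (\<forall>\<sigma>. total_order_of (Inv w n k) \<sigma> \<and> comm_equiv w n k \<sigma> \<rho> \<longrightarrow>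
            \<sigma> \<in> A_set w n k \<and> Rev n k w \<rho> = Rev n k w \<sigma>)
       \<and> (\<forall>X \<in> Inv w n (k + 1). \<forall>xs ys zs.
            \<rho> = xs @ ys @ zs \<and> set ys = packet X \<longrightarrow>
            (let \<sigma> = xs @ rev ys @ zs in
              \<sigma> \<in> A_set w n k
              \<and> (Rev n k w \<sigma> - Rev n k w \<rho>) \<union> (Rev n k w \<rho> - Rev n k w \<sigma>) = {X}))"
  proof -
  have a1: "Rev n k w \<rho> \<subseteq> Inv w n (k + 1)" unfolding Rev_def by auto
  have a2: "\<forall>A B. (A, B) \<in> P_ord w n (k + 1) \<and> B \<in> Rev n k w \<rho> \<longrightarrow> A \<in> Rev n k w \<rho>"
    using lower_ideal[OF assms(5) assms(2)] by blast
  have a3: "\<forall>X \<in> Inv w n (k + 2).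
               is_prefix_packet X (Rev n k w \<rho> \<inter> packet X)
             \<or> is_suffix_packet X (Rev n k w \<rho> \<inter> packet X)"
    using prefix_suffix[OF assms(5)] by blast
  have b: "\<forall>\<sigma>. total_order_of (Inv w n k) \<sigma> \<and> comm_equiv w n k \<sigma> \<rho> \<longrightarrow>
            \<sigma> \<in> A_set w n k \<and> Rev n k w \<rho> = Rev n k w \<sigma>"
    using part_b[OF assms(5)] by blast
  have c: "\<forall>X \<in> Inv w n (k + 1). \<forall>xs ys zs.
            \<rho> = xs @ ys @ zs \<and> set ys = packet X \<longrightarrow>
            (let \<sigma> = xs @ rev ys @ zs in
              \<sigma> \<in> A_set w n k
              \<and> (Rev n k w \<sigma> - Rev n k w \<rho>) \<union> (Rev n k w \<rho> - Rev n k w \<sigma>) = {X})"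
    unfolding Let_def using part_c[OF assms(5) assms(2)] by blast
  show ?thesis using a1 a2 a3 b c by blast
qed

end
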